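(* For every $g\ge 1$, $\det(K_{g+1})=[\det(K_g)]^3\det(A_g)$.
   Context: The graphs $\mathcal{H}_g$ with hubs $v_1,v_2,v_3,v_4$ and orientations $\mathcal{H}_g^e$ are defined recursively. $\mathcal{H}_1$ is the 4-cycle with edges $\{v_1,v_2\},\{v_1,v_3\},\{v_2,v_4\},\{v_3,v_4\}$, oriented $v_1\to v_2$, $v_1\to v_3$, $v_4\to v_2$, $v_3\to v_4$. For $g>1$, take four disjoint copies $\mathcal{H}_{g-1}^{(i)}$, $i=1,\dots,4$, of $\mathcal{H}_{g-1}$, each oriented as a copy of $\mathcal{H}_{g-1}^e$, with hubs $v_k^{(i)}$; identify $v_1^{(1)},v_1^{(4)}$ as $v_1$, $v_2^{(2)},v_1^{(3)}$ as $v_4$, $v_2^{(1)},v_1^{(2)}$ as $v_3$, and $v_2^{(3)},v_2^{(4)}$ as $v_2$; $\mathcal{H}_g^e$ is the union of the copies' orientations. $A_g$ is the skew adjacency matrix of $\mathcal{H}_g^e$: its $(u,v)$ entry is $1$ if $u\to v$ is an arc, $-1$ if $v\to u$ is an arc, and $0$ otherwise. $K_g$ is the submatrix of $A_g$ obtained by deleting the rows and columns corresponding to $v_1$ and $v_2$. *)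

theory Defs
  imports "Jordan_Normal_Form.Determinant"
begin

text \<open>Vertices of H_g are the naturals 0 ..< hnv g. The hubs are
  v1 = 0, v2 = 1, v3 = 2, v4 = 3. Only g >= 1 is meaningful.\<close>

fun hnv :: "nat \<Rightarrow> nat" where
  "hnv 0 = 4"
| "hnv (Suc 0) = 4"
| "hnv (Suc (Suc g)) = 4 * hnv (Suc g) - 4"

text \<open>Embedding of vertex k of copy c (c = 0..3 for copies 1..4) of a graph
  with m vertices into the glued graph.\<close>

definition hemb :: "nat \<Rightarrow> nat \<Rightarrow> nat \<Rightarrow> nat" where
  "hemb m c k =
     (if k = 0 then [0, 2, 3, 0] ! c
      else if k = 1 then [2, 3, 1, 1] ! c
      else 4 + c * (m - 2) + (k - 2))"

text \<open>Arcs (u,v) meaning u -> v of the orientation H_g^e.\<close>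

fun harcs :: "nat \<Rightarrow> (nat \<times> nat) set" where
  "harcs 0 = {}"
| "harcs (Suc 0) = {(0,1), (0,2), (3,1), (2,3)}"
| "harcs (Suc (Suc g)) =
     (\<Union>c<4. (\<lambda>(u,v). (hemb (hnv (Suc g)) c u, hemb (hnv (Suc g)) c v)) ` harcs (Suc g))"

definition skewA :: "nat \<Rightarrow> int mat" where
  "skewA g = mat (hnv g) (hnv g)
     (\<lambda>(u,v). if (u,v) \<in> harcs g then 1 else if (v,u) \<in> harcs g then -1 else 0)"

definition Kmat :: "nat \<Rightarrow> int mat" where
  "Kmat g = mat (hnv g - 2) (hnv g - 2) (\<lambda>(i,j). skewA g $$ (i + 2, j + 2))"

end

theory Submission
  imports Defs
begin

lemma schur:
  fixes B :: "'a :: field mat"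
  assumes B: "B \<in> carrier_mat p p" and C: "C \<in> carrier_mat p q"
    and C': "C' \<in> carrier_mat q p" and D: "D \<in> carrier_mat q q"
    and E: "E \<in> carrier_mat q q" and DE: "D * E = 1\<^sub>m q"
  shows "det (four_block_mat B C C' D) = det D * det (B - C * E * C')"
proof -
  let ?N = "four_block_mat (1\<^sub>m p) (0\<^sub>m p q) (- (E * C')) (1\<^sub>m q)"
  have EC: "E * C' \<in> carrier_mat q p" using E C' by auto
  have "four_block_mat B C C' D * ?N =
    four_block_mat (B * 1\<^sub>m p + C * (- (E * C'))) (B * 0\<^sub>m p q + C * 1\<^sub>m q)
      (C' * 1\<^sub>m p + D * (- (E * C'))) (C' * 0\<^sub>m p q + D * 1\<^sub>m q)"
    by (rule mult_four_block_mat[OF B C C' D], insert EC, auto)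
  also have "C * (- (E * C')) = - (C * E * C')" using C E C' by auto
  also have "D * (- (E * C')) = - C'" 
  proof -
    have "D * (E * C') = (D * E) * C'" using D E C' by auto
    thus ?thesis using DE C' D E by (subst uminus_mult_right_mat, auto)
  qed
  also have "B * 1\<^sub>m p + - (C * E * C') = B - C * E * C'"
    using B C E C' by (auto simp: minus_add_uminus_mat)
  also have "C' * 1\<^sub>m p + - C' = 0\<^sub>m q p" using C' by auto
  also have "B * 0\<^sub>m p q + C * 1\<^sub>m q = C" using B C by auto
  also have "C' * 0\<^sub>m p q + D * 1\<^sub>m q = D" using C' D by auto
  finally have MN: "four_block_mat B C C' D * ?N = four_block_mat (B - C * E * C') C (0\<^sub>m q p) D" .
  have "det (four_block_mat B C C' D * ?N) = det (four_block_mat B C C' D) * det ?N"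
    by (rule det_mult[of _ "p+q"], insert B C C' D EC, auto)
  moreover have "det ?N = 1"
    by (subst det_four_block_mat_upper_right_zero[of _ p _ q], insert EC, auto)
  moreover have "det (four_block_mat (B - C * E * C') C (0\<^sub>m q p) D) = det (B - C * E * C') * det D"
    by (rule det_four_block_mat_lower_left_zero, insert B C E C' D, auto)
  ultimately show ?thesis unfolding MN by (simp add: mult.commute)
qed

definition Bf :: "'a::comm_ring_1 \<Rightarrow> nat \<Rightarrow> nat \<Rightarrow> 'a" where
  "Bf a i j = (if i = 0 \<and> j = 1 then a else if i = 1 \<and> j = 0 then - a else 0)"

definition rA :: "(nat \<Rightarrow> 'a) \<Rightarrow> (nat \<Rightarrow> 'a) \<Rightarrow> nat \<Rightarrow> nat \<Rightarrow> 'a" where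
  "rA x y i p = (if i = 0 then x p else y p)"

definition rM :: "(nat \<Rightarrow> 'a::zero) \<Rightarrow> (nat \<Rightarrow> 'a) \<Rightarrow> nat \<Rightarrow> nat \<Rightarrow> nat \<Rightarrow> 'a" where
  "rM x y n i p = (if i = 0 then (if p < n then y p else if p < 2*n then x (p - n) else 0)
      else (if p < n then 0 else if p < 2*n then y (p - n) else x (p - 2*n)))"

definition D3f :: "(nat \<Rightarrow> nat \<Rightarrow> 'a::zero) \<Rightarrow> nat \<Rightarrow> nat \<Rightarrow> nat \<Rightarrow> 'a" where
  "D3f k n p r = (if p < n \<and> r < n then k p r
     else if n \<le> p \<and> p < 2*n \<and> n \<le> r \<and> r < 2*n then k (p - n) (r - n)
     else if 2*n \<le> p \<and> 2*n \<le> r then k (p - 2*n) (r - 2*n) else 0)"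

definition blk :: "(nat \<Rightarrow> nat \<Rightarrow> 'a::ab_group_add) \<Rightarrow> (nat \<Rightarrow> nat \<Rightarrow> 'a) \<Rightarrow> (nat \<Rightarrow> nat \<Rightarrow> 'a) \<Rightarrow> nat \<Rightarrow> 'a mat" where
  "blk B r D s = mat (2 + s) (2 + s) (\<lambda>(i,j). if i < 2 then (if j < 2 then B i j else r i (j - 2))
      else if j < 2 then - r j (i - 2) else D (i - 2) (j - 2))"

definition Abig :: "'a::comm_ring_1 \<Rightarrow> (nat \<Rightarrow> 'a) \<Rightarrow> (nat \<Rightarrow> 'a) \<Rightarrow> (nat \<Rightarrow> nat \<Rightarrow> 'a) \<Rightarrow> nat \<Rightarrow> 'a mat" where
  "Abig a x y k n = blk (Bf a) (rA x y) k n"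

definition Mgen :: "'a::comm_ring_1 \<Rightarrow> (nat \<Rightarrow> 'a) \<Rightarrow> (nat \<Rightarrow> 'a) \<Rightarrow> (nat \<Rightarrow> nat \<Rightarrow> 'a) \<Rightarrow> nat \<Rightarrow> 'a mat" where
  "Mgen a x y k n = blk (Bf a) (rM x y n) (D3f k n) (3 * n)"

definition qf :: "'a::comm_ring_1 mat \<Rightarrow> nat \<Rightarrow> (nat \<Rightarrow> 'a) \<Rightarrow> (nat \<Rightarrow> 'a) \<Rightarrow> 'a" where
  "qf E s u w = (\<Sum>q<s. (\<Sum>p<s. u p * E $$ (p,q)) * w q)"

lemma blk_four: "blk B r D s = four_block_mat (mat 2 2 (\<lambda>(i,j). B i j)) (mat 2 s (\<lambda>(i,p). r i p))
   (mat s 2 (\<lambda>(p,j). - r j p)) (mat s s (\<lambda>(p,q). D p q))"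
  unfolding blk_def by (rule eq_matI, auto)

lemma schur_entry:
  assumes E: "E \<in> carrier_mat s s" and i: "i < 2" and j: "j < 2"
  shows "(mat 2 2 (\<lambda>(i,j). B i j) - mat 2 s (\<lambda>(i,p). r i p) * E * mat s 2 (\<lambda>(p,j). - r j p)) $$ (i,j)
     = B i j + qf E s (r i) (r j)"
  using E i j by (simp add: qf_def scalar_prod_def sum_negf atLeast0LessThan)

lemma sum3: "(\<Sum>q<3*(n::nat). f q) = (\<Sum>q<n. f q) + (\<Sum>q<n. f (q + n)) + (\<Sum>q<n. f (q + 2*n))"
proof -
  have a: "{..<3*n} = {0..<n} \<union> {n..<2*n} \<union> {2*n..<3*n}" by auto
  have "(\<Sum>q<3*n. f q) = (\<Sum>q\<in>{0..<n}. f q) + (\<Sum>q\<in>{n..<2*n}. f q) + (\<Sum>q\<in>{2*n..<3*n}. f q)"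
    unfolding a by (subst sum.union_disjoint, auto, subst sum.union_disjoint, auto)
  also have "(\<Sum>q\<in>{n..<2*n}. f q) = (\<Sum>q<n. f (q + n))"
    using sum.shift_bounds_nat_ivl[of f 0 n n] by (simp add: lessThan_atLeast0 mult_2)
  also have "(\<Sum>q\<in>{2*n..<3*n}. f q) = (\<Sum>q<n. f (q + 2*n))"
    using sum.shift_bounds_nat_ivl[of f 0 "2*n" n] by (simp add: lessThan_atLeast0 add.commute)
  finally show ?thesis by (simp add: lessThan_atLeast0)
qed

lemma sum3': "(\<Sum>q<3*(n::nat). f q) = (\<Sum>d<3. \<Sum>q<n. f (q + d*n))"
  by (simp only: sum3) (simp add: numeral_3_eq_3 mult_2)

lemma D3f_blk: assumes "p < n" "r < n" "c < 3" "d < 3"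
  shows "D3f k n (p + c*n) (r + d*n) = (if c = d then k p r else 0)"
proof -
  have "c = 0 \<or> c = 1 \<or> c = 2" "d = 0 \<or> d = 1 \<or> d = 2" using assms by auto
  thus ?thesis using assms unfolding D3f_def by (auto simp: mult_2)
qed

lemma qf3: assumes E: "E \<in> carrier_mat n n"
  shows "qf (mat (3*n) (3*n) (\<lambda>(p,q). D3f (\<lambda>p q. E $$ (p,q)) n p q)) (3*n) u w
     = (\<Sum>d<3. qf E n (\<lambda>p. u (p + d*n)) (\<lambda>p. w (p + d*n)))"
proof -
  have inner: "(\<Sum>p<3*n. u p * D3f (\<lambda>p q. E $$ (p,q)) n p (q + d*n)) = (\<Sum>p<n. u (p + d*n) * E $$ (p,q))"
    if "q < n" "d < 3" for q d
  proof -
    have "(\<Sum>p<3*n. u p * D3f (\<lambda>p q. E $$ (p,q)) n p (q + d*n))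
      = (\<Sum>c<3. \<Sum>p<n. u (p + c*n) * D3f (\<lambda>p q. E $$ (p,q)) n (p + c*n) (q + d*n))"
      by (rule sum3')
    also have "\<dots> = (\<Sum>c<3. if c = d then (\<Sum>p<n. u (p + c*n) * E $$ (p,q)) else 0)"
      by (rule sum.cong, simp, auto simp: D3f_blk that)
    also have "\<dots> = (\<Sum>p<n. u (p + d*n) * E $$ (p,q))" using that by simp
    finally show ?thesis .
  qed
  have "qf (mat (3*n) (3*n) (\<lambda>(p,q). D3f (\<lambda>p q. E $$ (p,q)) n p q)) (3*n) u w
     = (\<Sum>q<3*n. (\<Sum>p<3*n. u p * D3f (\<lambda>p q. E $$ (p,q)) n p q) * w q)"
    unfolding qf_def by (rule sum.cong, auto intro!: sum.cong)
  also have "\<dots> = (\<Sum>d<3. \<Sum>q<n. (\<Sum>p<3*n. u p * D3f (\<lambda>p q. E $$ (p,q)) n p (q + d*n)) * w (q + d*n))"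
    by (rule sum3')
  also have "\<dots> = (\<Sum>d<3. qf E n (\<lambda>p. u (p + d*n)) (\<lambda>p. w (p + d*n)))"
    unfolding qf_def by (rule sum.cong, simp, rule sum.cong, simp, simp add: inner)
  finally show ?thesis .
qed

lemma D3_inv: assumes K: "K \<in> carrier_mat n n" and E: "E \<in> carrier_mat n n" and KE: "K * E = 1\<^sub>m n"
  shows "mat (3*n) (3*n) (\<lambda>(p,q). D3f (\<lambda>p q. K $$ (p,q)) n p q) *
         mat (3*n) (3*n) (\<lambda>(p,q). D3f (\<lambda>p q. E $$ (p,q)) n p q) = 1\<^sub>m (3*n)"
proof (rule eq_matI)
  fix i j assume i: "i < dim_row (1\<^sub>m (3*n) :: 'a mat)" and j: "j < dim_col (1\<^sub>m (3*n) :: 'a mat)"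
  hence i': "i < 3*n" and j': "j < 3*n" by auto
  hence n0: "n > 0" by auto
  define p c q d where "p = i mod n" "c = i div n" "q = j mod n" "d = j div n"
  have ip: "i = p + c*n" "j = q + d*n" unfolding p_c_q_d_def by auto
  have pc: "p < n" "c < 3" "q < n" "d < 3" unfolding p_c_q_d_def using i' j' n0
    by (auto simp: less_mult_imp_div_less)
  have KEe: "(\<Sum>r<n. K $$ (p, r) * E $$ (r, q)) = (if p = q then 1 else 0)"
  proof -
    have "(K * E) $$ (p,q) = (\<Sum>r<n. K $$ (p, r) * E $$ (r, q))"
      using K E pc by (simp add: scalar_prod_def atLeast0LessThan)
    thus ?thesis using KE pc by simp
  qed
  have "(mat (3*n) (3*n) (\<lambda>(p,q). D3f (\<lambda>p q. K $$ (p,q)) n p q) *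
         mat (3*n) (3*n) (\<lambda>(p,q). D3f (\<lambda>p q. E $$ (p,q)) n p q)) $$ (i,j)
      = (\<Sum>r<3*n. D3f (\<lambda>p q. K $$ (p,q)) n i r * D3f (\<lambda>p q. E $$ (p,q)) n r j)"
    using i' j' by (simp add: scalar_prod_def atLeast0LessThan)
  also have "\<dots> = (\<Sum>e<3. \<Sum>r<n. D3f (\<lambda>p q. K $$ (p,q)) n (p + c*n) (r + e*n) * D3f (\<lambda>p q. E $$ (p,q)) n (r + e*n) (q + d*n))"
    unfolding ip by (rule sum3')
  also have "\<dots> = (\<Sum>e<3. if e = c \<and> e = d then (\<Sum>r<n. K $$ (p, r) * E $$ (r, q)) else 0)"
    by (rule sum.cong, simp, auto simp: D3f_blk pc intro!: sum.neutral)
  also have "\<dots> = (if c = d then (\<Sum>r<n. K $$ (p, r) * E $$ (r, q)) else 0)"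
    using pc by (auto intro!: sum.neutral)
  also have "\<dots> = 1\<^sub>m (3*n) $$ (i,j)"
  proof -
    have ij: "(i = j) = (c = d \<and> p = q)"
    proof
      assume "i = j" thus "c = d \<and> p = q" unfolding p_c_q_d_def by simp
    next
      assume "c = d \<and> p = q" thus "i = j" using ip by simp
    qed
    show ?thesis unfolding KEe using i' j' ij by simp
  qed
  finally show "(mat (3*n) (3*n) (\<lambda>(p,q). D3f (\<lambda>p q. K $$ (p,q)) n p q) *
         mat (3*n) (3*n) (\<lambda>(p,q). D3f (\<lambda>p q. E $$ (p,q)) n p q)) $$ (i,j) = 1\<^sub>m (3*n) $$ (i,j)" .
qed auto

lemma D3_det: fixes K :: "'a :: idom mat" assumes K: "K \<in> carrier_mat n n"
  shows "det (mat (3*n) (3*n) (\<lambda>(p,q). D3f (\<lambda>p q. K $$ (p,q)) n p q)) = det K ^ 3"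
proof -
  have eq: "mat (3*n) (3*n) (\<lambda>(p,q). D3f (\<lambda>p q. K $$ (p,q)) n p q) =
    four_block_mat K (0\<^sub>m n (n+n)) (0\<^sub>m (n+n) n) (four_block_mat K (0\<^sub>m n n) (0\<^sub>m n n) K)"
    by (rule eq_matI, insert K, auto simp: D3f_def mult_2)
  have "det (four_block_mat K (0\<^sub>m n n) (0\<^sub>m n n) K) = det K * det K"
    by (rule det_four_block_mat_lower_left_zero[OF K], insert K, auto)
  moreover have "det (four_block_mat K (0\<^sub>m n (n+n)) (0\<^sub>m (n+n) n) (four_block_mat K (0\<^sub>m n n) (0\<^sub>m n n) K))
     = det K * det (four_block_mat K (0\<^sub>m n n) (0\<^sub>m n n) K)"
    by (rule det_four_block_mat_lower_left_zero[OF K], insert K, auto)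
  ultimately show ?thesis unfolding eq by (simp add: power3_eq_cube)
qed

lemma inv_exists: fixes K :: "rat mat" assumes K: "K \<in> carrier_mat n n" and d: "det K \<noteq> 0"
  shows "\<exists>E. E \<in> carrier_mat n n \<and> K * E = 1\<^sub>m n"
proof (intro exI conjI)
  let ?E = "inverse (det K) \<cdot>\<^sub>m adj_mat K"
  show "?E \<in> carrier_mat n n" using adj_mat(1)[OF K] by auto
  have "K * ?E = inverse (det K) \<cdot>\<^sub>m (K * adj_mat K)"
    by (rule mult_smult_distrib[OF K adj_mat(1)[OF K]])
  also have "\<dots> = 1\<^sub>m n" unfolding adj_mat(2)[OF K] using d
    by (intro eq_matI, auto)
  finally show "K * ?E = 1\<^sub>m n" .
qed

lemma inv_skew: fixes K :: "rat mat" assumes K: "K \<in> carrier_mat n n" and E: "E \<in> carrier_mat n n"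
  and KE: "K * E = 1\<^sub>m n" and sk: "\<And>p q. p < n \<Longrightarrow> q < n \<Longrightarrow> K $$ (p,q) = - K $$ (q,p)"
  and pq: "p < n" "q < n"
  shows "E $$ (p,q) = - E $$ (q,p)"
proof -
  have tK: "transpose_mat K = - K"
    apply (rule eq_matI)
    subgoal for i j using sk[of j i] K by auto
    using K by auto
  have "transpose_mat E * transpose_mat K = 1\<^sub>m n"
    using transpose_mult[OF K E, symmetric] KE by simp
  hence 1: "(- transpose_mat E) * K = 1\<^sub>m n" unfolding tK using K E
    by (subst uminus_mult_left_mat, simp, subst (asm) uminus_mult_right_mat, auto)
  have "- transpose_mat E = (- transpose_mat E) * (K * E)" using E by (simp add: KE)
  also have "\<dots> = ((- transpose_mat E) * K) * E" using E K
    by (subst assoc_mult_mat[of _ n n _ n _ n], auto)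
  also have "\<dots> = E" unfolding 1 using E by simp
  finally have "- transpose_mat E = E" .
  hence "E $$ (p,q) = (- transpose_mat E) $$ (p,q)" by simp
  thus ?thesis using E pq by simp
qed

lemma qf_skew0: fixes E :: "rat mat"
  assumes sk: "\<And>p q. p < n \<Longrightarrow> q < n \<Longrightarrow> E $$ (p,q) = - E $$ (q,p)"
  shows "(\<Sum>q<n. (\<Sum>p<n. u p * E $$ (p,q)) * u q) = 0"
proof -
  let ?X = "(\<Sum>q<n. (\<Sum>p<n. u p * E $$ (p,q)) * u q)"
  have "?X = (\<Sum>q<n. \<Sum>p<n. u p * E $$ (p,q) * u q)" by (simp add: sum_distrib_right)
  also have "\<dots> = (\<Sum>q<n. \<Sum>p<n. - (u q * E $$ (q,p) * u p))"
    apply (rule sum.cong, simp, rule sum.cong, simp)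
    subgoal for q p using sk[of p q] by simp
    done
  also have "\<dots> = - (\<Sum>p<n. \<Sum>q<n. u q * E $$ (q,p) * u p)"
    by (subst sum.swap, simp add: sum_negf)
  also have "(\<Sum>p<n. \<Sum>q<n. u q * E $$ (q,p) * u p) = ?X" by (simp add: sum_distrib_right)
  finally show ?thesis by linarith
qed

lemma main_gen: fixes k :: "nat \<Rightarrow> nat \<Rightarrow> rat"
  assumes sk: "\<And>p q. p < n \<Longrightarrow> q < n \<Longrightarrow> k p q = - k q p"
    and d: "det (mat n n (\<lambda>(p,q). k p q)) \<noteq> 0"
  shows "det (Mgen a x y k n) = det (mat n n (\<lambda>(p,q). k p q)) ^ 2 * det (Abig a x y k n)"
proof -
  define K where "K = mat n n (\<lambda>(p,q). k p q)"
  have K: "K \<in> carrier_mat n n" unfolding K_def by auto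
  from inv_exists[OF K d[folded K_def]] obtain E where E: "E \<in> carrier_mat n n" and KE: "K * E = 1\<^sub>m n"
    by blast
  have skK: "K $$ (p,q) = - K $$ (q,p)" if "p < n" "q < n" for p q
    using sk[OF that] that unfolding K_def by auto
  have skE: "E $$ (p,q) = - E $$ (q,p)" if "p < n" "q < n" for p q
    by (rule inv_skew[OF K E KE skK that])
  define D3 where "D3 = mat (3*n) (3*n) (\<lambda>(p,q). D3f (\<lambda>p q. K $$ (p,q)) n p q)"
  define E3 where "E3 = mat (3*n) (3*n) (\<lambda>(p,q). D3f (\<lambda>p q. E $$ (p,q)) n p q)"
  have D3eq: "mat (3*n) (3*n) (\<lambda>(p,q). D3f k n p q) = D3"
    unfolding D3_def K_def by (rule eq_matI) (auto simp: D3f_def mult_2)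
  have DE3: "D3 * E3 = 1\<^sub>m (3*n)" unfolding D3_def E3_def by (rule D3_inv[OF K E KE])
  have detD3: "det D3 = det K ^ 3" unfolding D3_def by (rule D3_det[OF K])
  define SA where "SA = mat 2 2 (\<lambda>(i,j). Bf a i j) - mat 2 n (\<lambda>(i,p). rA x y i p) * E * mat n 2 (\<lambda>(p,j). - rA x y j p)"
  define SM where "SM = mat 2 2 (\<lambda>(i,j). Bf a i j) - mat 2 (3*n) (\<lambda>(i,p). rM x y n i p) * E3 * mat (3*n) 2 (\<lambda>(p,j). - rM x y n j p)"
  have detA: "det (Abig a x y k n) = det K * det SA"
    unfolding Abig_def blk_four SA_def K_def[symmetric]
    by (rule schur[OF _ _ _ K E KE], auto)
  have detM: "det (Mgen a x y k n) = det D3 * det SM"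
    unfolding Mgen_def blk_four SM_def D3eq
    by (rule schur[OF _ _ _ _ _ DE3], auto simp: D3_def E3_def)
  have E3c: "E3 \<in> carrier_mat (3*n) (3*n)" unfolding E3_def by auto
  have "SM = SA"
  proof (rule eq_matI)
    fix i j assume i: "i < dim_row SA" and j: "j < dim_col SA"
    hence i2: "i < 2" and j2: "j < 2" unfolding SA_def by auto
    have "SM $$ (i,j) = Bf a i j + qf E3 (3*n) (rM x y n i) (rM x y n j)"
      unfolding SM_def by (rule schur_entry[OF E3c i2 j2])
    also have "\<dots> = Bf a i j + (\<Sum>d<3. qf E n (\<lambda>p. rM x y n i (p + d*n)) (\<lambda>p. rM x y n j (p + d*n)))"
      unfolding E3_def by (subst qf3[OF E], simp)
    finally have 1: "SM $$ (i,j) = \<dots>" .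
    have 2: "SA $$ (i,j) = Bf a i j + qf E n (rA x y i) (rA x y j)"
      unfolding SA_def by (rule schur_entry[OF E i2 j2])
    have "i = 0 \<or> i = 1" "j = 0 \<or> j = 1" using i2 j2 by auto
    then show "SM $$ (i,j) = SA $$ (i,j)" unfolding 1 2
      by (auto simp: qf_def numeral_3_eq_3 rM_def rA_def mult_2 qf_skew0[OF skE])
  qed (auto simp: SA_def SM_def)
  show ?thesis unfolding detA detM detD3 K_def[symmetric] \<open>SM = SA\<close>
    by (simp add: power2_eq_square power3_eq_cube)
qed

lemma hnv_ge4: "hnv (Suc g) \<ge> 4"
  by (induction g) auto

lemma hnv_SS: "hnv (Suc (Suc g)) = 4 * hnv (Suc g) - 4" by simp

lemma hemb_hub: "hemb m c 0 = [0, 2, 3, 0] ! c" "hemb m c (Suc 0) = [2, 3, 1, 1] ! c"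
  by (auto simp: hemb_def)

lemma c4: "c < (4::nat) \<Longrightarrow> c = 0 \<or> c = 1 \<or> c = 2 \<or> c = 3" by auto

lemma hemb_int: "k \<ge> 2 \<Longrightarrow> hemb m c k = 4 + c * (m - 2) + (k - 2)"
  by (simp add: hemb_def)

lemma hemb_lt: assumes "m \<ge> 4" "c < 4" "k < m" shows "hemb m c k < 4 * m - 4"
proof (cases "k < 2")
  case True
  hence "k = 0 \<or> k = 1" by auto
  moreover have "hemb m c 0 \<le> 3" "hemb m c 1 \<le> 3" using c4[OF assms(2)] by (auto simp: hemb_def)
  ultimately show ?thesis using assms by auto
next
  case False
  have "c * (m - 2) \<le> 3 * (m - 2)" using assms by auto
  hence "c * (m - 2) + (k - 2) + 4 < 4 * m - 4" using False assms by arith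
  thus ?thesis using False assms by (simp add: hemb_int)
qed

lemma hub_le3: "k < 2 \<Longrightarrow> c < 4 \<Longrightarrow> hemb m c k \<le> 3"
  using c4[of c] by (auto simp: hemb_def less_2_cases_iff)

lemma hemb_inj: assumes "m \<ge> 4" "c < 4" "k < m" "l < m" "hemb m c k = hemb m c l" shows "k = l"
proof -
  consider "k < 2" "l < 2" | "k < 2" "l \<ge> 2" | "k \<ge> 2" "l < 2" | "k \<ge> 2" "l \<ge> 2" by linarith
  thus ?thesis
  proof cases
    case 1 thus ?thesis using assms c4[OF assms(2)] by (auto simp: hemb_def less_2_cases_iff)
  next
    case 2 thus ?thesis using assms hub_le3[of k c m] hemb_int[of l m c] by auto
  next
    case 3 thus ?thesis using assms hub_le3[of l c m] hemb_int[of k m c] by auto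
  next
    case 4 thus ?thesis using assms hemb_int[of l m c] hemb_int[of k m c] by auto
  qed
qed

lemma blk_uniq: fixes n :: nat assumes "r < n" "r' < n" "c * n + r = c' * n + r'" shows "c = c'"
proof -
  have "(r + c * n) div n = c" "(r' + c' * n) div n = c'" using assms by auto
  moreover have "r + c * n = r' + c' * n" using assms(3) by simp
  ultimately show ?thesis by metis
qed

lemma hemb_cross: assumes "m \<ge> 4" "c < 4" "c' < 4" "k < m" "k' < m" "hemb m c k = hemb m c' k'" "c \<noteq> c'"
  shows "k < 2 \<and> k' < 2"
proof (rule ccontr)
  assume "\<not> (k < 2 \<and> k' < 2)"
  then consider "k \<ge> 2" "k' \<ge> 2" | "k < 2" "k' \<ge> 2" | "k \<ge> 2" "k' < 2" by linarith
  thus False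
  proof cases
    case 1
    hence "c * (m - 2) + (k - 2) = c' * (m - 2) + (k' - 2)" using assms hemb_int by auto
    hence "c = c'" by (rule blk_uniq[rotated 2], insert 1 assms, auto)
    thus False using assms by simp
  next
    case 2 thus False using assms hub_le3[of k c m] hemb_int[of k' m c'] by auto
  next
    case 3 thus False using assms hub_le3[of k' c' m] hemb_int[of k m c] by auto
  qed
qed

lemma hub_pairs: assumes "c < 4" "c' < 4" "c \<noteq> c'" "k < 2" "l < 2" "k \<noteq> l" "k' < 2" "l' < 2"
  "hemb m c k = hemb m c' k'" "hemb m c l = hemb m c' l'"
  shows False
  using assms c4[of c] c4[of c'] by (auto simp: hemb_def less_2_cases_iff)

lemma harcs_inv:
  "(\<forall>u v. (u,v) \<in> harcs (Suc g) \<longrightarrow> u < hnv (Suc g) \<and> v < hnv (Suc g)) \<and>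
   (\<forall>u. (u,u) \<notin> harcs (Suc g)) \<and>
   (\<forall>u v. (u,v) \<in> harcs (Suc g) \<longrightarrow> (v,u) \<notin> harcs (Suc g))"
proof (induction g)
  case 0 show ?case by auto
next
  case (Suc g)
  let ?m = "hnv (Suc g)"
  have m4: "?m \<ge> 4" by (rule hnv_ge4)
  note IH = Suc.IH
  have bnd: "(u,v) \<in> harcs (Suc (Suc g)) \<Longrightarrow> \<exists>c<4. \<exists>k l. (k,l) \<in> harcs (Suc g) \<and> k < ?m \<and> l < ?m \<and> u = hemb ?m c k \<and> v = hemb ?m c l" for u v
    using IH by fastforce
  show ?case
  proof (intro conjI allI impI)
    fix u v assume "(u,v) \<in> harcs (Suc (Suc g))"
    then obtain c k l where "c < 4" "k < ?m" "l < ?m" "u = hemb ?m c k" "v = hemb ?m c l" using bnd by blast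
    thus "u < hnv (Suc (Suc g))" "v < hnv (Suc (Suc g))" using hemb_lt[OF m4] by (auto simp del: hnv.simps simp: hnv_SS)
  next
    fix u show "(u,u) \<notin> harcs (Suc (Suc g))"
    proof
      assume "(u,u) \<in> harcs (Suc (Suc g))"
      then obtain c k l where "(k,l) \<in> harcs (Suc g)" "c < 4" "k < ?m" "l < ?m" "u = hemb ?m c k" "u = hemb ?m c l" using bnd by blast
      thus False using hemb_inj[OF m4] IH by metis
    qed
  next
    fix u v assume uv: "(u,v) \<in> harcs (Suc (Suc g))"
    show "(v,u) \<notin> harcs (Suc (Suc g))"
    proof
      assume vu: "(v,u) \<in> harcs (Suc (Suc g))"
      obtain c k l where kl: "(k,l) \<in> harcs (Suc g)" "c < 4" "k < ?m" "l < ?m" "u = hemb ?m c k" "v = hemb ?m c l" using bnd[OF uv] by blast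
      obtain c' k' l' where kl': "(k',l') \<in> harcs (Suc g)" "c' < 4" "k' < ?m" "l' < ?m" "v = hemb ?m c' k'" "u = hemb ?m c' l'" using bnd[OF vu] by blast
      show False
      proof (cases "c = c'")
        case True
        hence "k' = l" "l' = k" using hemb_inj[OF m4] kl kl' by metis+
        thus False using kl kl' IH by blast
      next
        case False
        have a: "k < 2 \<and> l' < 2" by (rule hemb_cross[OF m4 kl(2) kl'(2) kl(3) kl'(4)], insert kl kl' False, auto)
        have b: "l < 2 \<and> k' < 2" by (rule hemb_cross[OF m4 kl(2) kl'(2) kl(4) kl'(3)], insert kl kl' False, auto)
        have "k \<noteq> l" using kl IH by blast
        thus False using hub_pairs[of c c' k l l' k' ?m] a b kl kl' False by auto
      qed
    qed
  qed
qed

abbreviation mm :: "nat \<Rightarrow> nat" where "mm g \<equiv> hnv (Suc g)"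

lemma arcs_bnd: "(u,v) \<in> harcs (Suc g) \<Longrightarrow> u < mm g \<and> v < mm g"
  using harcs_inv[of g] by blast
lemma arcs_irr: "(u,u) \<notin> harcs (Suc g)"
  using harcs_inv[of g] by blast
lemma arcs_anti: "(u,v) \<in> harcs (Suc g) \<Longrightarrow> (v,u) \<notin> harcs (Suc g)"
  using harcs_inv[of g] by blast

lemma skewA_skew: assumes "u < mm g" "v < mm g"
  shows "skewA (Suc g) $$ (u,v) = - skewA (Suc g) $$ (v,u)"
  using assms arcs_anti[of u v g] arcs_anti[of v u g] unfolding skewA_def by auto

lemma skewA_diag: assumes "u < mm g" shows "skewA (Suc g) $$ (u,u) = 0"
  using assms arcs_irr[of u g] unfolding skewA_def by auto

lemma arcs_SS: "(u,v) \<in> harcs (Suc (Suc g)) \<longleftrightarrow>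
   (\<exists>c<4. \<exists>k l. (k,l) \<in> harcs (Suc g) \<and> u = hemb (mm g) c k \<and> v = hemb (mm g) c l)"
  by (simp only: harcs.simps(3)) force

lemma arc_lift: assumes c: "c < 4" and k: "k < mm g" and l: "l < mm g"
  shows "((hemb (mm g) c k, hemb (mm g) c l) \<in> harcs (Suc (Suc g))) = ((k,l) \<in> harcs (Suc g))"
proof
  assume "(k,l) \<in> harcs (Suc g)" thus "(hemb (mm g) c k, hemb (mm g) c l) \<in> harcs (Suc (Suc g))"
    unfolding arcs_SS using c by blast
next
  let ?m = "mm g"
  have m4: "?m \<ge> 4" by (rule hnv_ge4)
  assume "(hemb (mm g) c k, hemb (mm g) c l) \<in> harcs (Suc (Suc g))"
  then obtain c' k' l' where kl': "(k',l') \<in> harcs (Suc g)" "c' < 4" "hemb ?m c k = hemb ?m c' k'" "hemb ?m c l = hemb ?m c' l'"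
    unfolding arcs_SS by blast
  have b: "k' < ?m" "l' < ?m" using arcs_bnd[OF kl'(1)] by auto
  show "(k,l) \<in> harcs (Suc g)"
  proof (cases "c = c'")
    case True
    hence "k = k'" "l = l'" using hemb_inj[OF m4 c k b(1)] hemb_inj[OF m4 c l b(2)] kl' by auto
    thus ?thesis using kl' by simp
  next
    case False
    have a: "k < 2 \<and> k' < 2" by (rule hemb_cross[OF m4 c kl'(2) k b(1) kl'(3) False])
    have bb: "l < 2 \<and> l' < 2" by (rule hemb_cross[OF m4 c kl'(2) l b(2) kl'(4) False])
    have "k' \<noteq> l'" using kl'(1) arcs_irr by blast
    hence "k \<noteq> l" using kl' hemb_inj[OF m4 kl'(2) b(1) b(2)] by auto
    thus ?thesis using hub_pairs[of c c' k l k' l' ?m] a bb kl' False c by auto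
  qed
qed

lemma entryE: assumes c: "c < 4" and k: "k < mm g" and l: "l < mm g"
  shows "skewA (Suc (Suc g)) $$ (hemb (mm g) c k, hemb (mm g) c l) = skewA (Suc g) $$ (k,l)"
proof -
  have m4: "mm g \<ge> 4" by (rule hnv_ge4)
  have "hemb (mm g) c k < hnv (Suc (Suc g))" "hemb (mm g) c l < hnv (Suc (Suc g))"
    using hemb_lt[OF m4 c k] hemb_lt[OF m4 c l] by auto
  thus ?thesis unfolding skewA_def using arc_lift[OF c k l] arc_lift[OF c l k] k l by simp
qed

lemma entryZ: assumes u: "u < hnv (Suc (Suc g))" and v: "v < hnv (Suc (Suc g))"
  and no: "\<not> (\<exists>c<4. \<exists>k<mm g. \<exists>l<mm g. u = hemb (mm g) c k \<and> v = hemb (mm g) c l)"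
  shows "skewA (Suc (Suc g)) $$ (u, v) = 0"
proof -
  have "(u,v) \<notin> harcs (Suc (Suc g))" "(v,u) \<notin> harcs (Suc (Suc g))"
    using no arcs_bnd unfolding arcs_SS by blast+
  thus ?thesis unfolding skewA_def using u v by simp
qed

lemma rep2: assumes "m \<ge> 4" "c < 4" "k < m"
  shows "hemb m c k = 2 \<longleftrightarrow> (c = 0 \<and> k = 1) \<or> (c = 1 \<and> k = 0)"
proof (cases "k < 2")
  case True thus ?thesis using c4[OF assms(2)] by (auto simp: hemb_def less_2_cases_iff)
next
  case False thus ?thesis using hemb_int[of k m c] by auto
qed

lemma rep3: assumes "m \<ge> 4" "c < 4" "k < m"
  shows "hemb m c k = 3 \<longleftrightarrow> (c = 1 \<and> k = 1) \<or> (c = 2 \<and> k = 0)"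
proof (cases "k < 2")
  case True thus ?thesis using c4[OF assms(2)] by (auto simp: hemb_def less_2_cases_iff)
next
  case False thus ?thesis using hemb_int[of k m c] by auto
qed

lemma repI: assumes m: "m \<ge> 4" "c < 4" "k < m" and t: "t < m - 2"
  shows "hemb m c k = 4 + d * (m - 2) + t \<longleftrightarrow> (c = d \<and> k = t + 2)"
proof
  assume h: "hemb m c k = 4 + d * (m - 2) + t"
  have k2: "k \<ge> 2" using h hub_le3[of k c m] m by (cases "k < 2", auto)
  hence "c * (m - 2) + (k - 2) = d * (m - 2) + t" using h hemb_int[of k m c] by simp
  hence "c = d" by (rule blk_uniq[rotated 2], insert k2 m t, auto)
  thus "c = d \<and> k = t + 2" using h hemb_int[of k m c] k2 by auto
next
  assume "c = d \<and> k = t + 2" thus "hemb m c k = 4 + d * (m - 2) + t" using hemb_int[of k m c] by auto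
qed

lemma map_Mgen: "map_mat (of_int :: int \<Rightarrow> rat) (Mgen a x y k n) =
   Mgen (of_int a) (\<lambda>t. of_int (x t)) (\<lambda>t. of_int (y t)) (\<lambda>p q. of_int (k p q)) n"
  by (rule eq_matI) (auto simp: Mgen_def blk_def Bf_def rM_def D3f_def)

lemma map_Abig: "map_mat (of_int :: int \<Rightarrow> rat) (Abig a x y k n) =
   Abig (of_int a) (\<lambda>t. of_int (x t)) (\<lambda>t. of_int (y t)) (\<lambda>p q. of_int (k p q)) n"
  by (rule eq_matI) (auto simp: Abig_def blk_def Bf_def rA_def)

lemma map_K: "map_mat (of_int :: int \<Rightarrow> rat) (mat n n (\<lambda>(p,q). k p q)) = mat n n (\<lambda>(p,q). of_int (k p q))"
  by (rule eq_matI) auto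

lemma Abig_eq:
  fixes g :: nat
  defines "A \<equiv> skewA (Suc g)" and "n \<equiv> mm g - 2"
  shows "skewA (Suc g) = Abig (A $$ (0,1)) (\<lambda>t. A $$ (0, t+2)) (\<lambda>t. A $$ (1, t+2)) (\<lambda>p q. A $$ (p+2, q+2)) n"
proof -
  have m4: "mm g \<ge> 4" by (rule hnv_ge4)
  have mn: "mm g = 2 + n" unfolding n_def using m4 by auto
  show ?thesis
  proof (rule eq_matI)
    fix i j assume i: "i < dim_row (Abig (A $$ (0,1)) (\<lambda>t. A $$ (0, t+2)) (\<lambda>t. A $$ (1, t+2)) (\<lambda>p q. A $$ (p+2, q+2)) n)"
      and j: "j < dim_col (Abig (A $$ (0,1)) (\<lambda>t. A $$ (0, t+2)) (\<lambda>t. A $$ (1, t+2)) (\<lambda>p q. A $$ (p+2, q+2)) n)"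
    hence i': "i < mm g" and j': "j < mm g" unfolding Abig_def blk_def mn by auto
    have sk: "A $$ (u,v) = - A $$ (v,u)" if "u < mm g" "v < mm g" for u v
      unfolding A_def by (rule skewA_skew[OF that])
    have dg: "A $$ (u,u) = 0" if "u < mm g" for u unfolding A_def by (rule skewA_diag[OF that])
    have "skewA (Suc g) $$ (i,j) = A $$ (i,j)" unfolding A_def ..
    also have "\<dots> = Abig (A $$ (0,1)) (\<lambda>t. A $$ (0, t+2)) (\<lambda>t. A $$ (1, t+2)) (\<lambda>p q. A $$ (p+2, q+2)) n $$ (i,j)"
    proof -
      consider "i < 2" "j < 2" | "i < 2" "j \<ge> 2" | "i \<ge> 2" "j < 2" | "i \<ge> 2" "j \<ge> 2" by linarith
      thus ?thesis
      proof cases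
        case 1
        hence "(i = 0 \<or> i = 1) \<and> (j = 0 \<or> j = 1)" by auto
        thus ?thesis using i' j' m4 sk[of 1 0] dg[of 0] dg[of 1] unfolding Abig_def blk_def Bf_def mn by auto
      next
        case 2
        hence "i = 0 \<or> i = 1" by auto
        moreover have "Suc (Suc (j - 2)) = j" using 2 by auto
        ultimately show ?thesis using 2 i' j' unfolding Abig_def blk_def rA_def mn by auto
      next
        case 3
        hence "j = 0 \<or> j = 1" by auto
        moreover have "Suc (Suc (i - 2)) = i" using 3 by auto
        ultimately show ?thesis using 3 i' j' sk[of i j] unfolding Abig_def blk_def rA_def mn by auto
      next
        case 4
        moreover have "Suc (Suc (i - 2)) = i" "Suc (Suc (j - 2)) = j" using 4 by auto
        ultimately show ?thesis using i' j' unfolding Abig_def blk_def mn by auto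
      qed
    qed
    finally show "skewA (Suc g) $$ (i,j) = Abig (A $$ (0,1)) (\<lambda>t. A $$ (0, t+2)) (\<lambda>t. A $$ (1, t+2)) (\<lambda>p q. A $$ (p+2, q+2)) n $$ (i,j)" .
  qed (auto simp: Abig_def blk_def skewA_def mn)
qed

lemma vI: assumes "t < mm g - 2" "d < 4" shows "4 + d * (mm g - 2) + t = hemb (mm g) d (t + 2)"
  using repI[OF hnv_ge4[of g] assms(2), of "t+2" t d] assms by auto

lemma v23: "2 = hemb m 1 0" "2 = hemb m 0 1" "3 = hemb m 1 1" "3 = hemb m 2 0"
  by (auto simp: hemb_def)

lemma vI_bnd: assumes "t < mm g - 2" "d < 4" shows "4 + d * (mm g - 2) + t < hnv (Suc (Suc g))"
  using hemb_lt[OF hnv_ge4[of g] assms(2), of "t+2"] assms vI[OF assms] by auto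

lemma hub_bnd: "(2::nat) < hnv (Suc (Suc g))" "(3::nat) < hnv (Suc (Suc g))"
  using hnv_ge4[of g] by auto

lemma L_hh: "skewA (Suc (Suc g)) $$ (2,2) = 0"
   "skewA (Suc (Suc g)) $$ (2,3) = skewA (Suc g) $$ (0,1)"
   "skewA (Suc (Suc g)) $$ (3,2) = - skewA (Suc g) $$ (0,1)"
   "skewA (Suc (Suc g)) $$ (3,3) = 0"
proof -
  have m4: "mm g \<ge> 4" by (rule hnv_ge4)
  have 0: "(0::nat) < mm g" "(1::nat) < mm g" using m4 by auto
  show "skewA (Suc (Suc g)) $$ (2,2) = 0"
    using entryE[of 1 0 g 0] skewA_diag[of 0 g] 0 v23[of "mm g"] by auto
  show "skewA (Suc (Suc g)) $$ (2,3) = skewA (Suc g) $$ (0,1)"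
    using entryE[of 1 0 g 1] 0 v23[of "mm g"] by auto
  show "skewA (Suc (Suc g)) $$ (3,2) = - skewA (Suc g) $$ (0,1)"
    using entryE[of 1 1 g 0] 0 v23[of "mm g"] skewA_skew[of 1 g 0] by auto
  show "skewA (Suc (Suc g)) $$ (3,3) = 0"
    using entryE[of 1 1 g 1] skewA_diag[of 1 g] 0 v23[of "mm g"] by auto
qed

lemma L_hi: assumes t: "t < mm g - 2" and d: "d < 4"
  shows "skewA (Suc (Suc g)) $$ (2, 4 + d * (mm g - 2) + t) =
    (if d = 0 then skewA (Suc g) $$ (1, t+2) else if d = 1 then skewA (Suc g) $$ (0, t+2) else 0)"
proof -
  have m4: "mm g \<ge> 4" by (rule hnv_ge4)
  have tt: "t + 2 < mm g" using t by auto
  show ?thesis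
  proof (cases "d < 2")
    case True
    hence "d = 0 \<or> d = 1" by auto
    thus ?thesis using entryE[of 0 1 g "t+2"] entryE[of 1 0 g "t+2"] tt m4 vI[OF t d] v23[of "mm g"] by auto
  next
    case False
    have "\<not> (\<exists>c<4. \<exists>k<mm g. \<exists>l<mm g. 2 = hemb (mm g) c k \<and> 4 + d * (mm g - 2) + t = hemb (mm g) c l)"
    proof
      assume "\<exists>c<4. \<exists>k<mm g. \<exists>l<mm g. 2 = hemb (mm g) c k \<and> 4 + d * (mm g - 2) + t = hemb (mm g) c l"
      then obtain c k l where c: "c < 4" "k < mm g" "l < mm g" "2 = hemb (mm g) c k" "4 + d * (mm g - 2) + t = hemb (mm g) c l" by blast
      from rep2[OF m4 c(1,2)] c(4) repI[OF m4 c(1,3) t, of d] c(5) False show False by auto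
    qed
    thus ?thesis using entryZ[OF hub_bnd(1) vI_bnd[OF t d]] False by auto
  qed
qed

lemma L_3i: assumes t: "t < mm g - 2" and d: "d < 4"
  shows "skewA (Suc (Suc g)) $$ (3, 4 + d * (mm g - 2) + t) =
    (if d = 1 then skewA (Suc g) $$ (1, t+2) else if d = 2 then skewA (Suc g) $$ (0, t+2) else 0)"
proof -
  have m4: "mm g \<ge> 4" by (rule hnv_ge4)
  have tt: "t + 2 < mm g" using t by auto
  show ?thesis
  proof (cases "d = 1 \<or> d = 2")
    case True
    thus ?thesis using entryE[of 1 1 g "t+2"] entryE[of 2 0 g "t+2"] tt m4 vI[OF t d] v23[of "mm g"] by auto
  next
    case False
    have "\<not> (\<exists>c<4. \<exists>k<mm g. \<exists>l<mm g. 3 = hemb (mm g) c k \<and> 4 + d * (mm g - 2) + t = hemb (mm g) c l)"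
    proof
      assume "\<exists>c<4. \<exists>k<mm g. \<exists>l<mm g. 3 = hemb (mm g) c k \<and> 4 + d * (mm g - 2) + t = hemb (mm g) c l"
      then obtain c k l where c: "c < 4" "k < mm g" "l < mm g" "3 = hemb (mm g) c k" "4 + d * (mm g - 2) + t = hemb (mm g) c l" by blast
      from rep3[OF m4 c(1,2)] c(4) repI[OF m4 c(1,3) t, of d] c(5) False show False by auto
    qed
    thus ?thesis using entryZ[OF hub_bnd(2) vI_bnd[OF t d]] False by auto
  qed
qed

lemma L_ii: assumes t: "t < mm g - 2" and d: "d < 4" and t': "t' < mm g - 2" and d': "d' < 4"
  shows "skewA (Suc (Suc g)) $$ (4 + d * (mm g - 2) + t, 4 + d' * (mm g - 2) + t') =
    (if d = d' then skewA (Suc g) $$ (t+2, t'+2) else 0)"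
proof -
  have m4: "mm g \<ge> 4" by (rule hnv_ge4)
  show ?thesis
  proof (cases "d = d'")
    case True
    thus ?thesis using entryE[of d "t+2" g "t'+2"] t t' d vI[OF t d] vI[OF t' d'] by auto
  next
    case False
    have "\<not> (\<exists>c<4. \<exists>k<mm g. \<exists>l<mm g. 4 + d * (mm g - 2) + t = hemb (mm g) c k \<and> 4 + d' * (mm g - 2) + t' = hemb (mm g) c l)"
    proof
      assume "\<exists>c<4. \<exists>k<mm g. \<exists>l<mm g. 4 + d * (mm g - 2) + t = hemb (mm g) c k \<and> 4 + d' * (mm g - 2) + t' = hemb (mm g) c l"
      then obtain c k l where c: "c < 4" "k < mm g" "l < mm g" "4 + d * (mm g - 2) + t = hemb (mm g) c k" "4 + d' * (mm g - 2) + t' = hemb (mm g) c l" by blast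
      from repI[OF m4 c(1,2) t, of d] c(4) repI[OF m4 c(1,3) t', of d'] c(5) False show False by auto
    qed
    thus ?thesis using entryZ[OF vI_bnd[OF t d] vI_bnd[OF t' d']] False by auto
  qed
qed

lemma skew2: assumes "u < hnv (Suc (Suc g))" "v < hnv (Suc (Suc g))"
  shows "skewA (Suc (Suc g)) $$ (u,v) = - skewA (Suc (Suc g)) $$ (v,u)"
  using skewA_skew[of u "Suc g" v] assms by simp

definition hv :: "(nat \<Rightarrow> 'a::zero) \<Rightarrow> (nat \<Rightarrow> 'a) \<Rightarrow> nat \<Rightarrow> nat \<Rightarrow> nat \<Rightarrow> 'a" where
  "hv x y h d t = (if h = 0 then (if d = 0 then y t else if d = 1 then x t else 0)
     else (if d = 1 then y t else if d = 2 then x t else 0))"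

lemma d4: "d < (4::nat) \<Longrightarrow> d = 0 \<or> d = 1 \<or> d = 2 \<or> d = 3" by auto

context
  fixes K :: "'a :: comm_ring_1 mat" and kf :: "nat \<Rightarrow> nat \<Rightarrow> 'a" and n :: nat and a :: 'a and x y :: "nat \<Rightarrow> 'a"
  assumes K: "K \<in> carrier_mat n n" and Kk: "\<forall>p<n. \<forall>q<n. K $$ (p,q) = kf p q"
begin

abbreviation "FF \<equiv> four_block_mat (Mgen a x y kf n) (0\<^sub>m (2+3*n) n) (0\<^sub>m n (2+3*n)) K"

lemma dimM: "dim_row (Mgen a x y kf n) = 2 + 3 * n" "dim_col (Mgen a x y kf n) = 2 + 3 * n"
  by (auto simp: Mgen_def blk_def)

lemma RHS_hh: "h < 2 \<Longrightarrow> h' < 2 \<Longrightarrow> FF $$ (h,h') = Bf a h h'"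
  using K by (simp add: dimM, simp add: Mgen_def blk_def)

lemma RHS_hi: assumes "h < 2" "t < n" "d < 4" shows "FF $$ (h, 2 + d*n + t) = hv x y h d t"
proof -
  have "d = 0 \<or> d = 1 \<or> d = 2 \<or> d = 3" using d4 assms by auto
  thus ?thesis using assms K by (auto simp: dimM Mgen_def blk_def rM_def hv_def less_2_cases_iff)
qed

lemma RHS_ih: assumes "h < 2" "t < n" "d < 4" shows "FF $$ (2 + d*n + t, h) = - hv x y h d t"
proof -
  have "d = 0 \<or> d = 1 \<or> d = 2 \<or> d = 3" using d4 assms by auto
  thus ?thesis using assms K by (auto simp: dimM Mgen_def blk_def rM_def hv_def less_2_cases_iff)
qed

lemma RHS_ii: assumes "t < n" "d < 4" "t' < n" "d' < 4"
  shows "FF $$ (2 + d*n + t, 2 + d'*n + t') = (if d = d' then kf t t' else 0)"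
proof -
  have "d = 0 \<or> d = 1 \<or> d = 2 \<or> d = 3" "d' = 0 \<or> d' = 1 \<or> d' = 2 \<or> d' = 3" using d4 assms by auto
  thus ?thesis using assms K Kk by (auto simp: dimM Mgen_def blk_def D3f_def)
qed

end

lemma dec: assumes "(i::nat) < 4 * n + 2" "n > 0"
  shows "i < 2 \<or> (\<exists>t d. t < n \<and> d < 4 \<and> i = 2 + d * n + t)"
proof (cases "i < 2")
  case False
  let ?t = "(i - 2) mod n" and ?d = "(i - 2) div n"
  have "?t < n" using assms by auto
  moreover have "?d < 4" using assms False by (simp add: less_mult_imp_div_less mult.commute)
  moreover have "i = 2 + ?d * n + ?t" using False by (metis add.assoc add.commute div_mult_mod_eq le_add_diff_inverse not_less)
  ultimately show ?thesis by blast
qed simp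

lemma Kmat_eq:
  fixes g :: nat
  defines "A \<equiv> skewA (Suc g)" and "n \<equiv> mm g - 2"
  shows "Kmat (Suc (Suc g)) = four_block_mat
     (Mgen (A $$ (0,1)) (\<lambda>t. A $$ (0, t+2)) (\<lambda>t. A $$ (1, t+2)) (\<lambda>p q. A $$ (p+2, q+2)) n)
     (0\<^sub>m (2+3*n) n) (0\<^sub>m n (2+3*n)) (Kmat (Suc g))"
   (is "_ = ?F")
proof -
  let ?a = "A $$ (0,1)" and ?x = "\<lambda>t. A $$ (0, t+2)" and ?y = "\<lambda>t. A $$ (1, t+2)" and ?k = "\<lambda>p q. A $$ (p+2, q+2)"
  have m4: "mm g \<ge> 4" by (rule hnv_ge4)
  have mn: "mm g = n + 2" "n > 0" unfolding n_def using m4 by auto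
  have h2: "hnv (Suc (Suc g)) = 4 * n + 4" using mn by simp
  have Kc: "Kmat (Suc g) \<in> carrier_mat n n" unfolding Kmat_def n_def by auto
  have Kk: "\<forall>p<n. \<forall>q<n. Kmat (Suc g) $$ (p,q) = ?k p q"
    unfolding Kmat_def n_def A_def by auto
  note R = RHS_hh[OF Kc Kk] RHS_hi[OF Kc Kk] RHS_ih[OF Kc Kk] RHS_ii[OF Kc Kk]
  have dimF: "dim_row ?F = 4 * n + 2" "dim_col ?F = 4 * n + 2" using Kc by (auto simp: Mgen_def blk_def)
  have dK: "dim_row (Kmat (Suc (Suc g))) = 4 * n + 2" "dim_col (Kmat (Suc (Suc g))) = 4 * n + 2"
    unfolding Kmat_def dim_row_mat dim_col_mat h2 by simp_all
  show ?thesis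
  proof (rule eq_matI)
    fix i j assume "i < dim_row ?F" "j < dim_col ?F"
    hence i: "i < 4 * n + 2" and j: "j < 4 * n + 2" using dimF by auto
    have L: "Kmat (Suc (Suc g)) $$ (i,j) = skewA (Suc (Suc g)) $$ (i+2, j+2)"
      unfolding Kmat_def using i j h2 by auto
    have vv: "i + 2 = 4 + d * (mm g - 2) + t" if "i = 2 + d * n + t" for i d t
      using that n_def by auto
    consider "i < 2" "j < 2" | t d where "i < 2" "t < n" "d < 4" "j = 2 + d*n + t"
      | t d where "j < 2" "t < n" "d < 4" "i = 2 + d*n + t"
      | t d t' d' where "t < n" "d < 4" "i = 2 + d*n + t" "t' < n" "d' < 4" "j = 2 + d'*n + t'"
      using dec[OF i mn(2)] dec[OF j mn(2)] by blast
    thus "Kmat (Suc (Suc g)) $$ (i,j) = ?F $$ (i,j)"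
    proof cases
      case 1
      have r: "?F $$ (i,j) = Bf ?a i j" by (rule R(1)[OF 1])
      consider "i = 0" "j = 0" | "i = 0" "j = 1" | "i = 1" "j = 0" | "i = 1" "j = 1" using 1 by linarith
      thus ?thesis
      proof cases
        case 1
        hence e: "i + 2 = 2" "j + 2 = 2" "Bf ?a i j = 0" by (simp_all add: Bf_def)
        show ?thesis unfolding L r unfolding e L_hh(1) ..
      next
        case 2
        hence e: "i + 2 = 2" "j + 2 = 3" "Bf ?a i j = ?a" by (simp_all add: Bf_def)
        show ?thesis unfolding L r unfolding e L_hh(2) unfolding A_def ..
      next
        case 3
        hence e: "i + 2 = 3" "j + 2 = 2" "Bf ?a i j = - ?a" by (simp_all add: Bf_def)
        show ?thesis unfolding L r unfolding e L_hh(3) unfolding A_def ..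
      next
        case 4
        hence e: "i + 2 = 3" "j + 2 = 3" "Bf ?a i j = 0" by (simp_all add: Bf_def)
        show ?thesis unfolding L r unfolding e L_hh(4) ..
      qed
    next
      case (2 t d)
      note c2 = 2
      have tt: "t < mm g - 2" using 2 n_def by simp
      have r: "?F $$ (i,j) = hv ?x ?y i d t" unfolding 2(4) by (rule R(2)[OF 2(1-3)])
      consider "i = 0" | "i = 1" using 2 by linarith
      thus ?thesis
      proof cases
        case 1
        hence i2: "i + 2 = 2" by simp
        have h: "hv ?x ?y i d t = (if d = 0 then A $$ (1, t+2) else if d = 1 then A $$ (0, t+2) else 0)"
          unfolding hv_def using 1 by simp
        show ?thesis unfolding L r unfolding i2 vv[OF c2(4)] L_hi[OF tt c2(3)] h unfolding A_def ..
      next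
        case 2
        hence i2: "i + 2 = 3" by simp
        have h: "hv ?x ?y i d t = (if d = 1 then A $$ (1, t+2) else if d = 2 then A $$ (0, t+2) else 0)"
          unfolding hv_def using 2 by simp
        show ?thesis unfolding L r unfolding i2 vv[OF c2(4)] L_3i[OF tt c2(3)] h unfolding A_def ..
      qed
    next
      case (3 t d)
      have tt: "t < mm g - 2" using 3 n_def by simp
      have r: "?F $$ (i,j) = - hv ?x ?y j d t" unfolding 3(4) by (rule R(3)[OF 3(1-3)])
      have s2: "skewA (Suc (Suc g)) $$ (4 + d * (mm g - 2) + t, 2) = - skewA (Suc (Suc g)) $$ (2, 4 + d * (mm g - 2) + t)"
        by (rule skew2[OF vI_bnd[OF tt 3(3)] hub_bnd(1)])
      have s3: "skewA (Suc (Suc g)) $$ (4 + d * (mm g - 2) + t, 3) = - skewA (Suc (Suc g)) $$ (3, 4 + d * (mm g - 2) + t)"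
        by (rule skew2[OF vI_bnd[OF tt 3(3)] hub_bnd(2)])
      consider "j = 0" | "j = 1" using 3 by linarith
      thus ?thesis
      proof cases
        case 1
        hence j2: "j + 2 = 2" by simp
        have h: "hv ?x ?y j d t = (if d = 0 then A $$ (1, t+2) else if d = 1 then A $$ (0, t+2) else 0)"
          unfolding hv_def using 1 by simp
        show ?thesis unfolding L r unfolding j2 vv[OF 3(4)] s2 L_hi[OF tt 3(3)] h unfolding A_def ..
      next
        case 2
        hence j2: "j + 2 = 3" by simp
        have h: "hv ?x ?y j d t = (if d = 1 then A $$ (1, t+2) else if d = 2 then A $$ (0, t+2) else 0)"
          unfolding hv_def using 2 by simp
        show ?thesis unfolding L r unfolding j2 vv[OF 3(4)] s3 L_3i[OF tt 3(3)] h unfolding A_def ..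
      qed
    next
      case (4 t d t' d')
      have tt: "t < mm g - 2" "t' < mm g - 2" using 4 n_def by auto
      show ?thesis unfolding L vv[OF 4(3)] vv[OF 4(6)] R(4)[OF 4(1,2,4,5), folded 4(3) 4(6)]
        using L_ii[OF tt(1) 4(2) tt(2) 4(5)] by (auto simp: A_def)
    qed
  qed (rule trans[OF dK(1) dimF(1)[symmetric]], rule trans[OF dK(2) dimF(2)[symmetric]])
qed

theorem lemma7:
  fixes g :: nat
  assumes "g \<ge> 1"
  shows "det (Kmat (g + 1)) = (det (Kmat g)) ^ 3 * det (skewA g)"
proof -
  obtain h where g: "g = Suc h" using assms by (cases g) auto
  define A where "A = skewA (Suc h)"
  define n where "n = mm h - 2"
  define a where "a = A $$ (0,1)"
  define x where "x = (\<lambda>t. A $$ (0, t+2))"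
  define y where "y = (\<lambda>t. A $$ (1, t+2))"
  define kf where "kf = (\<lambda>p q. A $$ (p+2, q+2))"
  have KE: "Kmat (Suc (Suc h)) = four_block_mat (Mgen a x y kf n) (0\<^sub>m (2+3*n) n) (0\<^sub>m n (2+3*n)) (Kmat (Suc h))"
    unfolding a_def x_def y_def kf_def n_def A_def by (rule Kmat_eq)
  have AE: "skewA (Suc h) = Abig a x y kf n"
    unfolding a_def x_def y_def kf_def n_def A_def by (rule Abig_eq)
  have Kg: "Kmat (Suc h) = mat n n (\<lambda>(p,q). kf p q)"
    unfolding Kmat_def kf_def n_def A_def by simp
  have Kc: "Kmat (Suc h) \<in> carrier_mat n n" unfolding Kg by simp
  have Mc: "Mgen a x y kf n \<in> carrier_mat (2+3*n) (2+3*n)" by (simp add: Mgen_def blk_def)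
  have det1: "det (Kmat (Suc (Suc h))) = det (Mgen a x y kf n) * det (Kmat (Suc h))"
    unfolding KE by (rule det_four_block_mat_lower_left_zero[OF Mc _ refl Kc], simp)
  have claim: "det (Mgen a x y kf n) * det (Kmat (Suc h)) = det (Kmat (Suc h)) ^ 3 * det (Abig a x y kf n)"
  proof (cases "det (Kmat (Suc h)) = 0")
    case True
    thus ?thesis by simp
  next
    case False
    let ?h = "of_int :: int \<Rightarrow> rat"
    have sk: "?h (kf p q) = - ?h (kf q p)" if "p < n" "q < n" for p q
    proof -
      have "p + 2 < mm h" "q + 2 < mm h" using that n_def hnv_ge4[of h] by auto
      thus ?thesis unfolding kf_def A_def using skewA_skew by (metis of_int_minus)
    qed
    have dq: "det (mat n n (\<lambda>(p,q). ?h (kf p q))) = ?h (det (Kmat (Suc h)))"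
      unfolding Kg map_K[symmetric] by (rule of_int_hom.hom_det)
    have "?h (det (Mgen a x y kf n)) = det (map_mat ?h (Mgen a x y kf n))"
      by (rule of_int_hom.hom_det[symmetric])
    also have "\<dots> = det (Mgen (?h a) (\<lambda>t. ?h (x t)) (\<lambda>t. ?h (y t)) (\<lambda>p q. ?h (kf p q)) n)"
      unfolding map_Mgen ..
    also have "\<dots> = det (mat n n (\<lambda>(p,q). ?h (kf p q))) ^ 2 * det (Abig (?h a) (\<lambda>t. ?h (x t)) (\<lambda>t. ?h (y t)) (\<lambda>p q. ?h (kf p q)) n)"
      by (rule main_gen, rule sk, auto simp: dq False)
    also have "det (Abig (?h a) (\<lambda>t. ?h (x t)) (\<lambda>t. ?h (y t)) (\<lambda>p q. ?h (kf p q)) n) = ?h (det (Abig a x y kf n))"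
      unfolding map_Abig[symmetric] by (rule of_int_hom.hom_det)
    finally have "?h (det (Mgen a x y kf n)) = ?h (det (Kmat (Suc h)) ^ 2 * det (Abig a x y kf n))"
      unfolding dq by simp
    hence "det (Mgen a x y kf n) = det (Kmat (Suc h)) ^ 2 * det (Abig a x y kf n)" by (simp only: of_int_eq_iff)
    thus ?thesis by (simp add: power2_eq_square power3_eq_cube)
  qed
  show ?thesis unfolding g Suc_eq_plus1[symmetric] det1 claim AE[symmetric] ..
qed


end
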